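(* Let $p,q$ be integers with $p\equiv 2\pmod 4$ and $q\equiv 3\pmod 4$, and let $(u_n)_{n\ge0}$ be defined by $u_0=0$, $u_1=1$ and $u_{n+2}=pu_{n+1}+qu_n$ for all $n\ge0$. Then for all integers $n\ge0$ and $k\ge1$, $$u_{n+2^k}\equiv u_n+2^k\pmod{2^{k+1}}.$$ *)

theory Defs
  imports Main "HOL-Number_Theory.Cong"
begin

end

theory Submission
  imports Defs
begin

theorem mainTheorem8:
  fixes p q :: int and u :: "nat \<Rightarrow> int"
  assumes hp: "[p = 2] (mod 4)"
    and hq: "[q = 3] (mod 4)"
    and u0: "u 0 = 0"
    and u1: "u 1 = 1"
    and urec: "\<And>n. u (n + 2) = p * u (n + 1) + q * u n"
  shows "\<forall>n k. k \<ge> 1 \<longrightarrow> [u (n + 2 ^ k) = u n + 2 ^ k] (mod 2 ^ (k + 1))"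
proof -
  obtain c where "p - 2 = 4 * c"
    using hp unfolding cong_iff_dvd_diff by (auto simp: dvd_def)
  then have c: "p = 2 + 4 * c" by simp
  obtain e where "q - 3 = 4 * e"
    using hq unfolding cong_iff_dvd_diff by (auto simp: dvd_def)
  then have e: "q = 3 + 4 * e" by simp
  have m4: "(4::int) dvd u n - int n \<and> (4::int) dvd u (n+1) - int (n+1)" for n
  proof (induction n)
    case 0 then show ?case using u0 u1 by simp
  next
    case (Suc n)
    then obtain a b where "u (n+1) - int (n+1) = 4*a" and "u n - int n = 4*b"
      by (auto simp: dvd_def)
    then have a: "u (n+1) = int (n+1) + 4*a" and b: "u n = int n + 4*b" by simp_all
    have "u (n+2) = (2+4*c)*(int n+1+4*a) + (3+4*e)*(int n+4*b)"
      using urec[of n] a b c e by simp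
    also have "\<dots> = int (n+2) + 4*(int n + 2*a + c*(int n+1+4*a) + 3*b + e*(int n+4*b))"
      by (simp add: algebra_simps)
    finally have "(4::int) dvd u (n+2) - int (n+2)" by simp
    then show ?case using Suc by (simp add: numeral_2_eq_2)
  qed
  have base: "(4::int) dvd u (n+2) - u n - 2" for n
  proof -
    obtain a b where "u (n+1) - int (n+1) = 4*a" and "u n - int n = 4*b"
      using m4[of n] by (auto simp: dvd_def)
    then have a: "u (n+1) = int (n+1) + 4*a" and b: "u n = int n + 4*b" by simp_all
    have "u (n+2) - u n - 2 = (2+4*c)*(int n+1+4*a) + (3+4*e)*(int n+4*b) - (int n + 4*b) - 2"
      using urec[of n] a b c e by simp
    also have "\<dots> = 4*(int n + 2*a + c*(int n+1+4*a) + 2*b + e*(int n+4*b))"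
      by (simp add: algebra_simps)
    finally show ?thesis by simp
  qed
  have main: "(2::int)^(k+1) dvd u (n + 2^k) - u n - 2^k" if "k \<ge> 1" for k n
    using that
  proof (induction k arbitrary: n rule: dec_induct)
    case base
    then show ?case using \<open>\<And>n. (4::int) dvd u (n+2) - u n - 2\<close> by simp
  next
    case (step k)
    define N :: nat where "N = 2^k"
    define d where "d n = u (n+N) - u n - int N" for n
    have dd: "(2 * int N) dvd d n" for n
      using step.IH[of n] unfolding d_def N_def by simp
    have d2: "(4 * int N) dvd d (n+2) - d n" for n
    proof -
      obtain b1 where b1: "d (n+1) = 2 * int N * b1" using dd[of "n+1"] by (auto simp: dvd_def)
      obtain b0 where b0: "d n = 2 * int N * b0" using dd[of n] by (auto simp: dvd_def)
      have r1: "u (n + N + 2) = p * u (n + N + 1) + q * u (n+N)" using urec[of "n+N"] by simp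
      have "d (n+2) - d n = p * d (n+1) + (q - 1) * d n + (p+q-1) * int N"
      proof -
        have e2: "d (n+2) = u (n+N+2) - u (n+2) - int N" unfolding d_def by (simp add: ac_simps)
        have e1: "d (n+1) = u (n+N+1) - u (n+1) - int N" unfolding d_def by (simp add: ac_simps)
        have e0: "d n = u (n+N) - u n - int N" unfolding d_def by simp
        show ?thesis unfolding e2 e1 e0 r1 urec[of n] by (simp add: algebra_simps)
      qed
      also have "\<dots> = 4 * int N * (b1 + 2*c*b1 + b0 + 2*e*b0 + 1 + c + e)"
        using b1 b0 c e by (simp add: algebra_simps)
      finally show ?thesis by simp
    qed
    have dj: "(4 * int N) dvd d (n + 2*j) - d n" for j
    proof (induction j)
      case 0 then show ?case by simp
    next
      case (Suc j)
      have "d (n + 2*Suc j) - d n = (d (n+2*j+2) - d (n+2*j)) + (d (n+2*j) - d n)"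
        by (simp add: algebra_simps)
      then show ?case using d2[of "n+2*j"] Suc by (metis dvd_add)
    qed
    have Ne: "N = 2 * 2^(k-1)" unfolding N_def using step.hyps
      by (metis Suc_diff_le diff_Suc_1 le_trans order_refl power_Suc)
    have h1: "(4 * int N) dvd d (n + N) - d n" using dj[of "2^(k-1)"] Ne by simp
    obtain b0 where b0: "d n = 2 * int N * b0" using dd[of n] by (auto simp: dvd_def)
    have "u (n + 2^Suc k) - u n - 2^Suc k = (d (n+N) - d n) + 4 * int N * b0"
    proof -
      have i1: "n + 2^Suc k = n+N+N" unfolding N_def by simp
      have i2: "(2::int)^Suc k = 2 * int N" unfolding N_def by simp
      have i3: "d (n+N) = u (n+N+N) - u (n+N) - int N" unfolding d_def by simp
      have i4: "4 * int N * b0 = 2 * d n" using b0 by simp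
      show ?thesis unfolding i1 i2 i3 i4 by (simp add: d_def algebra_simps)
    qed
    moreover have "(4 * int N) = 2^(Suc k + 1)" unfolding N_def by simp
    ultimately show ?case using h1 by (metis dvd_add dvd_triv_left)
  qed
  show ?thesis
    using main by (simp add: cong_iff_dvd_diff algebra_simps diff_diff_eq)
qed

end
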